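(* For every pair of equations $E,E'$ in the unknowns $x_1,\dots,x_n$ and every $1\le k<\ell\le n$, the polynomial $t_{k\ell}^{E,E'}$ contains at most $2(|E|_{x_k}+|E|_{x_\ell})$ minimal monomials.
   Context: An equation is a pair $E=(u,v)$ of words over $\{x_1,\dots,x_n\}$; $|E|_x=|u|_x+|v|_x$, the number of occurrences of $x$. For $E=(x_{i_1}\cdots x_{i_r},\,x_{j_1}\cdots x_{j_s})$, $S_{E,x_j}=\sum_{a:\,i_a=j}\prod_{t=1}^{a-1}X_{i_t}-\sum_{a:\,j_a=j}\prod_{t=1}^{a-1}X_{j_t}\in\mathbb Z[X_1,\dots,X_n]$ (empty product $=1$), and $t_{k\ell}^{E,E'}=S_{E,x_k}S_{E',x_\ell}-S_{E',x_k}S_{E,x_\ell}$. Writing a polynomial as $p=\sum_\beta c_\beta\mathbf X^\beta$ ($\mathbf X^\beta=\prod X_i^{(\beta)_i}$), a monomial $\mathbf X^\beta$ with $c_\beta\ne0$ is minimal in $p$ if no $\beta'\ne\beta$ with $c_{\beta'}\ne0$ satisfies $\beta'\le\beta$ componentwise; the number of minimal monomials is the number of such $\beta$. *)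

theory Defs
  imports Main "HOL-Library.Poly_Mapping"
begin

type_synonym mpoly = "(nat \<Rightarrow>\<^sub>0 nat) \<Rightarrow>\<^sub>0 int"

text \<open>A word over x_1..x_n is a list of variable indices; an equation is a pair of words.\<close>
type_synonym word = "nat list"
type_synonym equation = "word \<times> word"

definition Var :: "nat \<Rightarrow> mpoly" where
  "Var i = Poly_Mapping.single (Poly_Mapping.single i 1) 1"

definition occ :: "equation \<Rightarrow> nat \<Rightarrow> nat" where
  "occ E x = count_list (fst E) x + count_list (snd E) x"

definition Ssum :: "word \<Rightarrow> nat \<Rightarrow> mpoly" where
  "Ssum w j = (\<Sum>a<length w. if w ! a = j then prod_list (map Var (take a w)) else 0)"

definition S :: "equation \<Rightarrow> nat \<Rightarrow> mpoly" where
  "S E j = Ssum (fst E) j - Ssum (snd E) j"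

definition tpoly :: "equation \<Rightarrow> equation \<Rightarrow> nat \<Rightarrow> nat \<Rightarrow> mpoly" where
  "tpoly E E' k l = S E k * S E' l - S E' k * S E l"

definition le_cw :: "(nat \<Rightarrow>\<^sub>0 nat) \<Rightarrow> (nat \<Rightarrow>\<^sub>0 nat) \<Rightarrow> bool" where
  "le_cw \<beta>' \<beta> \<longleftrightarrow> (\<forall>i. Poly_Mapping.lookup \<beta>' i \<le> Poly_Mapping.lookup \<beta> i)"

definition minimal_monomials :: "mpoly \<Rightarrow> (nat \<Rightarrow>\<^sub>0 nat) set" where
  "minimal_monomials p =
     {\<beta> \<in> Poly_Mapping.keys p. \<not> (\<exists>\<beta>'\<in>Poly_Mapping.keys p. \<beta>' \<noteq> \<beta> \<and> le_cw \<beta>' \<beta>)}"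

end

theory Submission
  imports Defs
begin

definition ex :: "word \<Rightarrow> (nat \<Rightarrow>\<^sub>0 nat)" where
  "ex w = sum_list (map (\<lambda>i. Poly_Mapping.single i 1) w)"

definition Pos :: "word \<Rightarrow> nat \<Rightarrow> nat set" where
  "Pos w x = {a. a < length w \<and> w ! a = x}"

lemma prod_Var: "prod_list (map Var w) = Poly_Mapping.single (ex w) 1"
  by (induction w) (simp_all add: ex_def Var_def mult_single)

lemma ex_append: "ex (xs @ ys) = ex xs + ex ys"
  by (simp add: ex_def)

lemma keys_Ssum: "Poly_Mapping.keys (Ssum w j) \<subseteq> (\<lambda>a. ex (take a w)) ` Pos w j"
proof -
  have "Poly_Mapping.keys (Ssum w j) \<subseteq>
    (\<Union>a\<in>{..<length w}. Poly_Mapping.keys (if w ! a = j then prod_list (map Var (take a w)) else 0))"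
    unfolding Ssum_def by (rule keys_sum)
  also have "\<dots> \<subseteq> (\<lambda>a. ex (take a w)) ` Pos w j"
  proof
    fix x assume "x \<in> (\<Union>a\<in>{..<length w}. Poly_Mapping.keys (if w ! a = j then prod_list (map Var (take a w)) else 0))"
    then obtain a where a: "a < length w" "x \<in> Poly_Mapping.keys (if w ! a = j then prod_list (map Var (take a w)) else 0)"
      by blast
    then have "w ! a = j" by (cases "w ! a = j") simp_all
    with a have "x = ex (take a w)" by (simp add: prod_Var)
    with a \<open>w ! a = j\<close> show "x \<in> (\<lambda>a. ex (take a w)) ` Pos w j" by (auto simp: Pos_def)
  qed
  finally show ?thesis .
qed

lemma keys_S: "Poly_Mapping.keys (S E j) \<subseteq>
   (\<lambda>a. ex (take a (fst E))) ` Pos (fst E) j \<union> (\<lambda>a. ex (take a (snd E))) ` Pos (snd E) j"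
proof -
  have "Poly_Mapping.keys (S E j) \<subseteq> Poly_Mapping.keys (Ssum (fst E) j) \<union> Poly_Mapping.keys (Ssum (snd E) j)"
    unfolding S_def by (rule keys_diff)
  then show ?thesis using keys_Ssum[of "fst E" j] keys_Ssum[of "snd E" j] by (rule order.trans[OF _ Un_mono])
qed

lemma keys_S_any: "Poly_Mapping.keys (S E j) \<subseteq>
   range (\<lambda>b. ex (take b (fst E))) \<union> range (\<lambda>b. ex (take b (snd E)))"
  by (rule order.trans[OF keys_S]) (intro Un_mono image_mono; simp)

lemma le_cw_take: "a \<le> b \<Longrightarrow> le_cw (ex (take a w)) (ex (take b w))"
proof -
  assume "a \<le> b"
  then have "take b w = take a w @ take (b - a) (drop a w)"
    using take_add[of a "b - a" w] by simp
  then show ?thesis by (simp add: le_cw_def ex_append lookup_add)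
qed

lemma le_cw_add: "le_cw y z \<Longrightarrow> le_cw (x + y) (x + z)"
  by (simp add: le_cw_def lookup_add)

lemma Pos_Cons: "Pos (y # ys) x = (if y = x then {0} else {}) \<union> Suc ` Pos ys x"
proof (rule set_eqI)
  fix a show "a \<in> Pos (y # ys) x \<longleftrightarrow> a \<in> (if y = x then {0} else {}) \<union> Suc ` Pos ys x"
    by (cases a) (auto simp: Pos_def)
qed

lemma card_Pos: "card (Pos w x) = count_list w x"
proof (induction w)
  case Nil then show ?case by (simp add: Pos_def)
next
  case (Cons y ys)
  have "card (Suc ` Pos ys x) = card (Pos ys x)" by (simp add: card_image)
  moreover have "finite (Pos ys x)" by (simp add: Pos_def)
  moreover have "0 \<notin> Suc ` Pos ys x" by auto
  ultimately show ?case using Cons by (simp add: Pos_Cons)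
qed

definition chainset :: "equation \<Rightarrow> equation \<Rightarrow> (bool \<times> nat) \<times> bool \<Rightarrow> (nat \<Rightarrow>\<^sub>0 nat) set" where
  "chainset E E' c = (case c of ((s, a), s') \<Rightarrow>
     {ex (take a (if s then fst E else snd E)) + ex (take b (if s' then fst E' else snd E')) | b. True})"

definition PS :: "equation \<Rightarrow> nat \<Rightarrow> (bool \<times> nat) set" where
  "PS E j = ({True} \<times> Pos (fst E) j) \<union> ({False} \<times> Pos (snd E) j)"

lemma card_PS: "card (PS E j) \<le> occ E j"
proof -
  have "card (PS E j) \<le> card ({True} \<times> Pos (fst E) j) + card ({False} \<times> Pos (snd E) j)"
    unfolding PS_def by (rule card_Un_le)
  also have "\<dots> = occ E j" by (simp add: card_cartesian_product card_Pos occ_def)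
  finally show ?thesis .
qed

lemma finite_PS: "finite (PS E j)" by (simp add: PS_def Pos_def)

theorem lemma4p4:
  fixes n k l :: nat and E E' :: equation
  assumes "set (fst E) \<subseteq> {1..n}" and "set (snd E) \<subseteq> {1..n}"
    and "set (fst E') \<subseteq> {1..n}" and "set (snd E') \<subseteq> {1..n}"
    and "1 \<le> k" and "k < l" and "l \<le> n"
  shows "card (minimal_monomials (tpoly E E' k l)) \<le> 2 * (occ E k + occ E l)"
proof -
  define t where "t = tpoly E E' k l"
  define M where "M = minimal_monomials t"
  define L where "L = (PS E k \<union> PS E l) \<times> (UNIV :: bool set)"
  have finL: "finite L" by (simp add: L_def finite_PS)
  have cardL: "card L \<le> 2 * (occ E k + occ E l)"
  proof -
    have "card L = card (PS E k \<union> PS E l) * 2" by (simp add: L_def card_cartesian_product)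
    also have "\<dots> \<le> (card (PS E k) + card (PS E l)) * 2" using card_Un_le[of "PS E k" "PS E l"] by simp
    also have "\<dots> \<le> (occ E k + occ E l) * 2" using card_PS[of E k] card_PS[of E l] by simp
    finally show ?thesis by simp
  qed
  have inchain: "\<exists>c\<in>L. \<beta> \<in> chainset E E' c" if "\<beta> \<in> Poly_Mapping.keys t" for \<beta>
  proof -
    have "\<beta> \<in> Poly_Mapping.keys (S E k * S E' l) \<union> Poly_Mapping.keys (S E' k * S E l)"
      using that keys_diff[of "S E k * S E' l" "S E' k * S E l"] unfolding t_def tpoly_def by blast
    then obtain x y j where j: "j = k \<or> j = l" and x: "x \<in> Poly_Mapping.keys (S E j)"
      and y: "y \<in> Poly_Mapping.keys (S E' (if j = k then l else k))" and b: "\<beta> = x + y"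
    proof
      assume "\<beta> \<in> Poly_Mapping.keys (S E k * S E' l)"
      then obtain x y where "x \<in> Poly_Mapping.keys (S E k)" "y \<in> Poly_Mapping.keys (S E' l)" "\<beta> = x + y"
        using keys_mult[of "S E k" "S E' l"] by blast
      then show ?thesis using that[of k x y] by simp
    next
      assume "\<beta> \<in> Poly_Mapping.keys (S E' k * S E l)"
      then obtain x y where "y \<in> Poly_Mapping.keys (S E' k)" "x \<in> Poly_Mapping.keys (S E l)" "\<beta> = y + x"
        using keys_mult[of "S E' k" "S E l"] by blast
      then show ?thesis using that[of l x y] \<open>k < l\<close> by (simp add: add.commute)
    qed
    have "x \<in> (\<lambda>a. ex (take a (fst E))) ` Pos (fst E) j \<union> (\<lambda>a. ex (take a (snd E))) ` Pos (snd E) j"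
      using x keys_S[of E j] by blast
    then obtain s a where sa: "(s, a) \<in> PS E j" "x = ex (take a (if s then fst E else snd E))"
    proof
      assume "x \<in> (\<lambda>a. ex (take a (fst E))) ` Pos (fst E) j"
      then obtain a where "a \<in> Pos (fst E) j" "x = ex (take a (fst E))" by blast
      then show ?thesis using that[of True a] by (simp add: PS_def)
    next
      assume "x \<in> (\<lambda>a. ex (take a (snd E))) ` Pos (snd E) j"
      then obtain a where "a \<in> Pos (snd E) j" "x = ex (take a (snd E))" by blast
      then show ?thesis using that[of False a] by (simp add: PS_def)
    qed
    have "y \<in> range (\<lambda>b. ex (take b (fst E'))) \<union> range (\<lambda>b. ex (take b (snd E')))"
      using y keys_S_any[of E' "if j = k then l else k"] by blast
    then obtain s' b' where "y = ex (take b' (if s' then fst E' else snd E'))"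
    proof
      assume "y \<in> range (\<lambda>b. ex (take b (fst E')))"
      then obtain b' where "y = ex (take b' (fst E'))" by blast
      then show ?thesis using that[of b' True] by simp
    next
      assume "y \<in> range (\<lambda>b. ex (take b (snd E')))"
      then obtain b' where "y = ex (take b' (snd E'))" by blast
      then show ?thesis using that[of b' False] by simp
    qed
    then have "\<beta> \<in> chainset E E' ((s, a), s')" using sa b by (auto simp: chainset_def)
    moreover have "((s, a), s') \<in> L" using sa j by (auto simp: L_def)
    ultimately show ?thesis by blast
  qed
  have Msub: "M \<subseteq> (\<Union>c\<in>L. M \<inter> chainset E E' c)"
    using inchain by (auto simp: M_def minimal_monomials_def)
  have finM: "finite M" by (simp add: M_def minimal_monomials_def)
  have one: "card (M \<inter> chainset E E' c) \<le> 1" for c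
  proof -
    have "\<beta>1 = \<beta>2" if h1: "\<beta>1 \<in> M \<inter> chainset E E' c" and h2: "\<beta>2 \<in> M \<inter> chainset E E' c" for \<beta>1 \<beta>2
    proof -
      obtain s a s' where c: "c = ((s, a), s')" by (metis prod.collapse)
      define u where "u = (if s then fst E else snd E)"
      define w where "w = (if s' then fst E' else snd E')"
      obtain b1 b2 where b1: "\<beta>1 = ex (take a u) + ex (take b1 w)"
        and b2: "\<beta>2 = ex (take a u) + ex (take b2 w)"
        using h1 h2 by (auto simp: chainset_def c u_def w_def)
      have "le_cw \<beta>1 \<beta>2 \<or> le_cw \<beta>2 \<beta>1"
      proof (cases "b1 \<le> b2")
        case True
        then show ?thesis using b1 b2 le_cw_add le_cw_take[of b1 b2 w] by simp
      next
        case False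
        then have "b2 \<le> b1" by simp
        then show ?thesis using b1 b2 le_cw_add le_cw_take[of b2 b1 w] by simp
      qed
      then show ?thesis using h1 h2 by (auto simp: M_def minimal_monomials_def)
    qed
    then show ?thesis using finM by (simp add: card_le_Suc0_iff_eq)
  qed
  have "card M \<le> card (\<Union>c\<in>L. M \<inter> chainset E E' c)"
    using Msub finM finL by (intro card_mono) auto
  also have "\<dots> \<le> (\<Sum>c\<in>L. card (M \<inter> chainset E E' c))" using finL by (rule card_UN_le)
  also have "\<dots> \<le> (\<Sum>c\<in>L. 1)" using one by (intro sum_mono) auto
  also have "\<dots> = card L" by simp
  finally show ?thesis using cardL by (simp add: M_def t_def)
qed

end
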